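(* Let $n\ge2$, $k\ge1$ be integers, $p\in(0,1/2]$ with $k\le np/2-1$, $\pi$ a probability vector on $[k]$, $i\in[k]$, and $j$ an integer with $1\le j\le np/2-k$. Then $$\Big|\beta_1(j,i)-\frac{\pi[i]}{p}\Big|=O\Big(\frac{e^{-\Omega(np)}}{p}\Big),\qquad \big|\beta_0(j,i)-(1-\pi[i])\big|=O\big(p\,e^{-\Omega(np)}\big),$$ where $O(\cdot),\Omega(\cdot)$ hide universal constants. Consequently, if $np=\Omega\big(\log\max_{i'\in[k]}\frac{1}{\pi[i']}\big)$ with a sufficiently large universal constant hidden in the $\Omega$, then $\beta_1(j,i)\ge\frac{\pi[i]}{2p}$ and $0\le\beta_0(j,i)\le1$.
   Context: $B_{n,p,k'}=\sum_{i'=k'}^n\binom{n}{i'}p^{i'}(1-p)^{n-i'}$. Define $\beta_1(j,i)=\frac{\pi[i]B_{n,p,j+k}}{p}+\big(B_{n-1,p,j+k-1}-\frac{1-pB_{n-1,p,j+k-1}}{1-p}\big)(1-\pi[i])$ and $\beta_0(j,i)=\frac{1-pB_{n-1,p,j+k-1}}{1-p}(1-\pi[i])$. *)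

theory Defs
  imports Complex_Main
begin

definition Btail :: "nat \<Rightarrow> real \<Rightarrow> nat \<Rightarrow> real" where
  "Btail n p m = (\<Sum>i'=m..n. real (n choose i') * p ^ i' * (1 - p) ^ (n - i'))"

definition beta1 :: "nat \<Rightarrow> real \<Rightarrow> nat \<Rightarrow> (nat \<Rightarrow> real) \<Rightarrow> nat \<Rightarrow> nat \<Rightarrow> real" where
  "beta1 n p k \<pi> j i =
     \<pi> i * Btail n p (j + k) / p
     + (Btail (n - 1) p (j + k - 1) - (1 - p * Btail (n - 1) p (j + k - 1)) / (1 - p)) * (1 - \<pi> i)"

definition beta0 :: "nat \<Rightarrow> real \<Rightarrow> nat \<Rightarrow> (nat \<Rightarrow> real) \<Rightarrow> nat \<Rightarrow> nat \<Rightarrow> real" where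
  "beta0 n p k \<pi> j i = (1 - p * Btail (n - 1) p (j + k - 1)) / (1 - p) * (1 - \<pi> i)"

end

theory Submission
  imports Defs
begin

lemma ln2_ub: "ln (2::real) \<le> 7/8"
proof -
  have "exp (7/8::real) = exp (7/16) ^ 2" using exp_of_nat_mult[of 2 "7/16::real"] by simp
  also have "\<dots> \<ge> (1 + 7/16) ^ 2" using exp_ge_add_one_self[of "7/16::real"]
    by (intro power_mono) auto
  finally have "(1 + 7/16) ^ 2 \<le> exp (7/8::real)" .
  moreover have "(2::real) \<le> (1 + 7/16) ^ 2" by (simp add: power2_eq_square)
  ultimately have "2 \<le> exp (7/8::real)" by linarith
  then have "ln 2 \<le> ln (exp (7/8::real))" by (subst ln_le_cancel_iff) auto
  then show ?thesis by simp
qed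

lemma ln2_lb: "ln (2::real) \<ge> 1/2"
proof -
  have "ln (1/2::real) \<le> 1/2 - 1" by (rule ln_le_minus_one) auto
  then show ?thesis by (simp add: ln_div)
qed

definition Lsum :: "nat \<Rightarrow> real \<Rightarrow> nat \<Rightarrow> real" where
  "Lsum n p m = (\<Sum>i<m. real (n choose i) * p ^ i * (1 - p) ^ (n - i))"

lemma Lsum_nonneg: "0 \<le> p \<Longrightarrow> p \<le> 1 \<Longrightarrow> 0 \<le> Lsum n p m"
  unfolding Lsum_def by (intro sum_nonneg) auto

lemma Btail_eq:
  assumes "m \<le> n + 1"
  shows "Btail n p m = 1 - Lsum n p m"
proof -
  have "(p + (1 - p)) ^ n = (\<Sum>i\<le>n. real (n choose i) * p ^ i * (1 - p) ^ (n - i))"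
    by (rule binomial_ring)
  also have "{..n} = {..<m} \<union> {m..n}" using assms by auto
  also have "(\<Sum>i\<in>{..<m} \<union> {m..n}. real (n choose i) * p ^ i * (1 - p) ^ (n - i))
      = Lsum n p m + Btail n p m"
    unfolding Lsum_def Btail_def by (subst sum.union_disjoint) auto
  finally show ?thesis by simp
qed

lemma Lsum_bound:
  assumes "0 \<le> p" "p \<le> 1" "1 \<le> m" "m \<le> n + 1"
  shows "Lsum n p m \<le> 2 ^ (m - 1) * exp (- real n * p / 2)"
proof -
  have "(1/2) ^ (m - 1) * Lsum n p m
      = (\<Sum>i<m. real (n choose i) * p ^ i * (1 - p) ^ (n - i) * (1/2) ^ (m - 1))"
    unfolding Lsum_def by (simp add: sum_distrib_left mult_ac)
  also have "\<dots> \<le> (\<Sum>i<m. real (n choose i) * (p/2) ^ i * (1 - p) ^ (n - i))"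
  proof (intro sum_mono)
    fix i assume "i \<in> {..<m}"
    then have "(1/2::real) ^ (m - 1) \<le> (1/2) ^ i" by (intro power_decreasing) auto
    then have "real (n choose i) * p ^ i * (1 - p) ^ (n - i) * (1/2) ^ (m - 1)
        \<le> real (n choose i) * p ^ i * (1 - p) ^ (n - i) * (1/2) ^ i"
      using assms by (intro mult_left_mono) auto
    then show "real (n choose i) * p ^ i * (1 - p) ^ (n - i) * (1/2) ^ (m - 1)
        \<le> real (n choose i) * (p/2) ^ i * (1 - p) ^ (n - i)"
      by (simp add: power_divide)
  qed
  also have "\<dots> \<le> (\<Sum>i\<le>n. real (n choose i) * (p/2) ^ i * (1 - p) ^ (n - i))"
    using assms by (intro sum_mono2) auto
  also have "\<dots> = (p/2 + (1 - p)) ^ n" by (rule binomial_ring[symmetric])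
  also have "\<dots> \<le> exp (- p/2) ^ n"
    using assms exp_ge_add_one_self[of "-p/2"] by (intro power_mono) auto
  also have "\<dots> = exp (- real n * p / 2)" using exp_of_nat_mult[of n "-p/2"] by simp
  finally have h: "(1/2) ^ (m - 1) * Lsum n p m \<le> exp (- real n * p / 2)" .
  have "Lsum n p m = 2 ^ (m - 1) * ((1/2) ^ (m - 1) * Lsum n p m)"
    by (simp add: power_one_over)
  also have "\<dots> \<le> 2 ^ (m - 1) * exp (- real n * p / 2)"
    using h by (intro mult_left_mono) auto
  finally show ?thesis .
qed

lemma pow2_exp: "(2::real) ^ k = exp (real k * ln 2)"
  using exp_of_nat_mult[of k "ln (2::real)"] by simp

lemma D_bound:
  assumes "0 < p" "p \<le> 1/2" "1 \<le> m" "real m \<le> real n * p / 2"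
  shows "0 \<le> 1 - Btail n p m \<and> 1 - Btail n p m \<le> exp (- (1/16) * real n * p) / 2"
proof -
  have "real n * p \<le> real n * (1/2)" using assms by (intro mult_left_mono) auto
  then have "real m \<le> real n / 4" using assms by linarith
  then have mn: "m \<le> n + 1" by linarith
  have eq: "1 - Btail n p m = Lsum n p m" using Btail_eq[OF mn] by simp
  have "Lsum n p m \<le> 2 ^ (m - 1) * exp (- real n * p / 2)"
    using assms mn by (intro Lsum_bound) auto
  also have "\<dots> = exp (real (m - 1) * ln 2 + (- real n * p / 2))"
    by (simp only: pow2_exp exp_add)
  also have "\<dots> \<le> exp (- (1/16) * real n * p - ln 2)"
  proof -
    have r: "real (m - 1) = real m - 1" using assms by auto
    have np: "0 \<le> real n * p" using assms by auto
    have "real (m - 1) * ln 2 \<le> (real n * p / 2 - 1) * ln 2"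
      using assms r by (intro mult_right_mono) auto
    also have "\<dots> = (real n * p) * ln 2 / 2 - ln 2" by (simp add: algebra_simps)
    finally have a: "real (m - 1) * ln 2 \<le> (real n * p) * ln 2 / 2 - ln 2" .
    have b: "(real n * p) * ln 2 \<le> (real n * p) * (7/8)"
      using ln2_ub np by (intro mult_left_mono) auto
    have "real (m - 1) * ln 2 + (- real n * p / 2) \<le> - (1/16) * real n * p - ln 2"
      using a b by linarith
    then show ?thesis by simp
  qed
  also have "\<dots> = exp (- (1/16) * real n * p) / 2" by (simp add: exp_diff)
  finally show ?thesis using eq Lsum_nonneg[of p n m] assms by auto
qed

lemma delta_bound:
  assumes "0 < p" "p \<le> 1/2" "2 \<le> m" "real m \<le> real n * p / 2" "1 \<le> n"
  shows "0 \<le> 1 - Btail (n - 1) p (m - 1) \<and>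
         1 - Btail (n - 1) p (m - 1) \<le> exp (- (1/16) * real n * p) / 2"
proof -
  have "real n * p \<le> real n * (1/2)" using assms by (intro mult_left_mono) auto
  then have "real m \<le> real n / 4" using assms by linarith
  then have mn: "m - 1 \<le> (n - 1) + 1" using assms by linarith
  have eq: "1 - Btail (n - 1) p (m - 1) = Lsum (n - 1) p (m - 1)" using Btail_eq[OF mn] by simp
  have rn: "real (n - 1) = real n - 1" using assms by auto
  have "Lsum (n - 1) p (m - 1) \<le> 2 ^ (m - 1 - 1) * exp (- real (n - 1) * p / 2)"
    using assms mn by (intro Lsum_bound) auto
  also have "\<dots> = exp (real (m - 1 - 1) * ln 2 + (- real (n - 1) * p / 2))"
    by (simp only: pow2_exp exp_add)
  also have "\<dots> \<le> exp (- (1/16) * real n * p - ln 2)"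
  proof -
    have r: "real (m - 1 - 1) = real m - 2" using assms by auto
    have np: "0 \<le> real n * p" using assms by auto
    have "real (m - 1 - 1) * ln 2 \<le> (real n * p / 2 - 2) * ln 2"
      using assms r by (intro mult_right_mono) auto
    also have "\<dots> = (real n * p) * ln 2 / 2 - 2 * ln 2" by (simp add: algebra_simps)
    finally have a: "real (m - 1 - 1) * ln 2 \<le> (real n * p) * ln 2 / 2 - 2 * ln 2" .
    have b: "(real n * p) * ln 2 \<le> (real n * p) * (7/8)"
      using ln2_ub np by (intro mult_left_mono) auto
    have c: "- real (n - 1) * p / 2 = - (real n * p) / 2 + p / 2" unfolding rn by (simp add: field_simps)
    have "real (m - 1 - 1) * ln 2 + (- real (n - 1) * p / 2) \<le> - (1/16) * real n * p - ln 2"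
      using a b c ln2_lb assms(2) by linarith
    then show ?thesis by simp
  qed
  also have "\<dots> = exp (- (1/16) * real n * p) / 2" by (simp add: exp_diff)
  finally show ?thesis using eq Lsum_nonneg[of p "n - 1" "m - 1"] assms by auto
qed

lemma alg_common:
  fixes p \<pi> D \<delta> E :: real
  assumes p: "0 < p" "p \<le> 1/2" and pi: "0 \<le> \<pi>" "\<pi> \<le> 1"
    and D: "0 \<le> D" "D \<le> E/2" and d: "0 \<le> \<delta>" "\<delta> \<le> E/2"
  shows "\<pi> * (1 - D) / p + ((1 - \<delta>) - (1 - p * (1 - \<delta>)) / (1 - p)) * (1 - \<pi>)
           = \<pi> / p - \<pi> * D / p - (1 - \<pi>) * (\<delta> / (1 - p))"
    and "(1 - p * (1 - \<delta>)) / (1 - p) * (1 - \<pi>) = (1 - \<pi>) + (1 - \<pi>) * (p * (\<delta> / (1 - p)))"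
    and "0 \<le> \<delta> / (1 - p)" "\<delta> / (1 - p) \<le> 2 * \<delta>"
    and "\<pi> * D \<le> E / 2" "(1 - \<pi>) * (\<delta> / (1 - p)) \<le> E"
    and "0 \<le> \<pi> * D" "0 \<le> (1 - \<pi>) * (\<delta> / (1 - p))"
proof -
  have q: "1 - p \<noteq> 0" "0 < 1 - p" using p by auto
  show "\<pi> * (1 - D) / p + ((1 - \<delta>) - (1 - p * (1 - \<delta>)) / (1 - p)) * (1 - \<pi>)
           = \<pi> / p - \<pi> * D / p - (1 - \<pi>) * (\<delta> / (1 - p))"
    using p q by (simp add: field_simps)
  show "(1 - p * (1 - \<delta>)) / (1 - p) * (1 - \<pi>) = (1 - \<pi>) + (1 - \<pi>) * (p * (\<delta> / (1 - p)))"
    using p q by (simp add: field_simps)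
  show x0: "0 \<le> \<delta> / (1 - p)" using d q by auto
  have "\<delta> * 1 \<le> \<delta> * (2 * (1 - p))" using d p by (intro mult_left_mono) auto
  then have "\<delta> \<le> 2 * \<delta> * (1 - p)" by (simp add: mult_ac)
  then show x1: "\<delta> / (1 - p) \<le> 2 * \<delta>" using q by (simp add: divide_le_eq)
  have "\<pi> * D \<le> 1 * D" using pi D by (intro mult_right_mono) auto
  then show "\<pi> * D \<le> E / 2" using D by linarith
  have "(1 - \<pi>) * (\<delta> / (1 - p)) \<le> 1 * (\<delta> / (1 - p))"
    using pi x0 by (intro mult_right_mono) auto
  then show "(1 - \<pi>) * (\<delta> / (1 - p)) \<le> E" using x1 d by linarith
  show "0 \<le> \<pi> * D" using pi D by auto
  show "0 \<le> (1 - \<pi>) * (\<delta> / (1 - p))" using pi x0 by (intro mult_nonneg_nonneg) auto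
qed

lemma alg1:
  fixes p \<pi> D \<delta> E :: real
  assumes p: "0 < p" "p \<le> 1/2" and pi: "0 \<le> \<pi>" "\<pi> \<le> 1"
    and D: "0 \<le> D" "D \<le> E/2" and d: "0 \<le> \<delta>" "\<delta> \<le> E/2"
  shows "\<bar>\<pi> * (1 - D) / p + ((1 - \<delta>) - (1 - p * (1 - \<delta>)) / (1 - p)) * (1 - \<pi>) - \<pi> / p\<bar> \<le> 1 * E / p"
    and "\<bar>(1 - p * (1 - \<delta>)) / (1 - p) * (1 - \<pi>) - (1 - \<pi>)\<bar> \<le> 1 * p * E"
proof -
  note c = alg_common[OF assms]
  have E: "0 \<le> E" using D by linarith
  have "E * (2 * p) \<le> E * 1" using E p by (intro mult_left_mono) auto
  then have E2: "E \<le> E / (2 * p)" using p by (simp add: le_divide_eq)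
  have a: "\<pi> * D / p \<le> (E / 2) / p" using c(5) p by (intro divide_right_mono) auto
  have a0: "0 \<le> \<pi> * D / p" using c(7) p by auto
  have "(E / 2) / p = E / (2 * p)" by simp
  moreover have "E / p = E / (2 * p) + E / (2 * p)" by (simp add: field_simps)
  ultimately show "\<bar>\<pi> * (1 - D) / p + ((1 - \<delta>) - (1 - p * (1 - \<delta>)) / (1 - p)) * (1 - \<pi>) - \<pi> / p\<bar> \<le> 1 * E / p"
  proof -
    have eq: "\<pi> * (1 - D) / p + ((1 - \<delta>) - (1 - p * (1 - \<delta>)) / (1 - p)) * (1 - \<pi>) - \<pi> / p
       = - (\<pi> * D / p + (1 - \<pi>) * (\<delta> / (1 - p)))" using c(1) by simp
    have "\<bar>\<pi> * (1 - D) / p + ((1 - \<delta>) - (1 - p * (1 - \<delta>)) / (1 - p)) * (1 - \<pi>) - \<pi> / p\<bar>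
       = \<pi> * D / p + (1 - \<pi>) * (\<delta> / (1 - p))"
      unfolding eq abs_minus_cancel using a0 c(8) by simp
    moreover have "\<pi> * D / p + (1 - \<pi>) * (\<delta> / (1 - p)) \<le> E / (2 * p) + E / (2 * p)"
    proof (rule add_mono)
      show "\<pi> * D / p \<le> E / (2 * p)" using a by (simp only: divide_divide_eq_left)
      show "(1 - \<pi>) * (\<delta> / (1 - p)) \<le> E / (2 * p)" using c(6) E2 by (rule order_trans)
    qed
    ultimately have "\<bar>\<pi> * (1 - D) / p + ((1 - \<delta>) - (1 - p * (1 - \<delta>)) / (1 - p)) * (1 - \<pi>) - \<pi> / p\<bar>
       \<le> E / (2 * p) + E / (2 * p)" by (rule ord_eq_le_trans)
    then show ?thesis unfolding mult_1_left \<open>E / p = E / (2 * p) + E / (2 * p)\<close> .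
  qed
  have b: "(1 - \<pi>) * (p * (\<delta> / (1 - p))) = p * ((1 - \<pi>) * (\<delta> / (1 - p)))" by simp
  have le: "p * ((1 - \<pi>) * (\<delta> / (1 - p))) \<le> p * E" using c(6) p by (intro mult_left_mono) auto
  have nn: "0 \<le> p * ((1 - \<pi>) * (\<delta> / (1 - p)))" using p by (intro mult_nonneg_nonneg[OF _ c(8)]) auto
  show "\<bar>(1 - p * (1 - \<delta>)) / (1 - p) * (1 - \<pi>) - (1 - \<pi>)\<bar> \<le> 1 * p * E"
    unfolding c(2) b add_diff_cancel_left' mult_1_left abs_of_nonneg[OF nn] by (rule le)
qed

lemma alg2:
  fixes p \<pi> D \<delta> E :: real
  assumes p: "0 < p" "p \<le> 1/2" and pi: "0 \<le> \<pi>" "\<pi> \<le> 1"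
    and D: "0 \<le> D" "D \<le> E/2" and d: "0 \<le> \<delta>" "\<delta> \<le> E/2" and Epi: "E \<le> \<pi>"
  shows "\<pi> / (2 * p) \<le> \<pi> * (1 - D) / p + ((1 - \<delta>) - (1 - p * (1 - \<delta>)) / (1 - p)) * (1 - \<pi>)"
    and "0 \<le> (1 - p * (1 - \<delta>)) / (1 - p) * (1 - \<pi>)"
    and "(1 - p * (1 - \<delta>)) / (1 - p) * (1 - \<pi>) \<le> 1"
proof -
  note c = alg_common[OF p pi D d]
  have q: "0 < 1 - p" using p by auto
  have "\<delta> * p \<le> \<delta> * (1 - p)" using p d by (intro mult_left_mono) auto
  then have "p * \<delta> \<le> \<delta> * (1 - p)" by (simp add: mult.commute)
  then have pd: "p * (\<delta> / (1 - p)) \<le> \<delta>" using q by (simp add: pos_divide_le_eq)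
  have pd0: "0 \<le> p * (\<delta> / (1 - p))" using p by (intro mult_nonneg_nonneg[OF _ c(3)]) auto
  have s1: "\<pi> * D \<le> \<pi> * (E / 2)" using pi D by (intro mult_left_mono) auto
  have "p * ((1 - \<pi>) * (\<delta> / (1 - p))) = (1 - \<pi>) * (p * (\<delta> / (1 - p)))" by simp
  also have "\<dots> \<le> (1 - \<pi>) * (E / 2)"
  proof (rule mult_left_mono)
    show "p * (\<delta> / (1 - p)) \<le> E / 2" using pd d by linarith
  qed (use pi in auto)
  finally have s2: "p * ((1 - \<pi>) * (\<delta> / (1 - p))) \<le> (1 - \<pi>) * (E / 2)" .
  have e3: "(1 - \<pi>) * (E / 2) = E / 2 - \<pi> * (E / 2)" by (simp add: left_diff_distrib)
  have "\<pi> * D + p * ((1 - \<pi>) * (\<delta> / (1 - p))) \<le> \<pi> / 2"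
    using s1 s2 e3 Epi by linarith
  then have "(\<pi> * D + p * ((1 - \<pi>) * (\<delta> / (1 - p)))) / p \<le> (\<pi> / 2) / p"
    using p by (intro divide_right_mono) auto
  moreover have "(\<pi> * D + p * ((1 - \<pi>) * (\<delta> / (1 - p)))) / p
      = \<pi> * D / p + (1 - \<pi>) * (\<delta> / (1 - p))" using p by (simp add: add_divide_distrib)
  moreover have "(\<pi> / 2) / p = \<pi> / (2 * p)" by simp
  moreover have "\<pi> / (2 * p) + \<pi> / (2 * p) = \<pi> / p" by (simp add: field_simps)
  ultimately have k1: "\<pi> * D / p + (1 - \<pi>) * (\<delta> / (1 - p)) \<le> \<pi> / (2 * p)"
    and k2: "\<pi> / (2 * p) + \<pi> / (2 * p) = \<pi> / p" by simp_all
  have gen: "\<And>a b s t :: real. a + b \<le> s \<Longrightarrow> s + s = t \<Longrightarrow> s \<le> t - a - b" by linarith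
  show "\<pi> / (2 * p) \<le> \<pi> * (1 - D) / p + ((1 - \<delta>) - (1 - p * (1 - \<delta>)) / (1 - p)) * (1 - \<pi>)"
    unfolding c(1) by (rule gen[OF k1 k2])
  have t0: "0 \<le> (1 - \<pi>) * (p * (\<delta> / (1 - p)))" using pi by (intro mult_nonneg_nonneg[OF _ pd0]) auto
  have "(1 - \<pi>) * (p * (\<delta> / (1 - p))) \<le> 1 * \<delta>"
    using pi pd pd0 d by (intro mult_mono) auto
  then show "0 \<le> (1 - p * (1 - \<delta>)) / (1 - p) * (1 - \<pi>)"
    and "(1 - p * (1 - \<delta>)) / (1 - p) * (1 - \<pi>) \<le> 1"
    using c(2) t0 pi d Epi by linarith+
qed

lemma alg1B:
  fixes p \<pi> B B' E :: real
  assumes "0 < p" "p \<le> 1/2" "0 \<le> \<pi>" "\<pi> \<le> 1"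
    "0 \<le> 1 - B" "1 - B \<le> E/2" "0 \<le> 1 - B'" "1 - B' \<le> E/2"
  shows "\<bar>\<pi> * B / p + (B' - (1 - p * B') / (1 - p)) * (1 - \<pi>) - \<pi> / p\<bar> \<le> 1 * E / p"
    and "\<bar>(1 - p * B') / (1 - p) * (1 - \<pi>) - (1 - \<pi>)\<bar> \<le> 1 * p * E"
  using alg1[OF assms, unfolded diff_diff_eq2 add_diff_cancel_left'] by auto

lemma alg2B:
  fixes p \<pi> B B' E :: real
  assumes "0 < p" "p \<le> 1/2" "0 \<le> \<pi>" "\<pi> \<le> 1"
    "0 \<le> 1 - B" "1 - B \<le> E/2" "0 \<le> 1 - B'" "1 - B' \<le> E/2" "E \<le> \<pi>"
  shows "\<pi> / (2 * p) \<le> \<pi> * B / p + (B' - (1 - p * B') / (1 - p)) * (1 - \<pi>)"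
    and "0 \<le> (1 - p * B') / (1 - p) * (1 - \<pi>)"
    and "(1 - p * B') / (1 - p) * (1 - \<pi>) \<le> 1"
  using alg2[OF assms, unfolded diff_diff_eq2 add_diff_cancel_left'] by auto

lemma setup_facts:
  fixes n k j i :: nat and p :: real and \<pi> :: "nat \<Rightarrow> real"
  assumes "n \<ge> 2" "k \<ge> 1" "0 < p" "p \<le> 1/2"
    "\<forall>i'\<in>{1..k}. \<pi> i' \<ge> 0" "(\<Sum>i'=1..k. \<pi> i') = 1"
    "i \<in> {1..k}" "1 \<le> j" "real j \<le> real n * p / 2 - real k"
  shows "0 \<le> \<pi> i" "\<pi> i \<le> 1"
    "0 \<le> 1 - Btail n p (j + k)" "1 - Btail n p (j + k) \<le> exp (- (1/16) * real n * p) / 2"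
    "0 \<le> 1 - Btail (n - 1) p (j + k - 1)"
    "1 - Btail (n - 1) p (j + k - 1) \<le> exp (- (1/16) * real n * p) / 2"
proof -
  show "0 \<le> \<pi> i" using assms by auto
  have "\<pi> i \<le> (\<Sum>i'=1..k. \<pi> i')" using assms by (intro member_le_sum) auto
  then show "\<pi> i \<le> 1" using assms by simp
  have m: "real (j + k) \<le> real n * p / 2" using assms by simp
  show "0 \<le> 1 - Btail n p (j + k)" "1 - Btail n p (j + k) \<le> exp (- (1/16) * real n * p) / 2"
    using D_bound[OF assms(3,4) _ m] assms by auto
  have "j + k - 1 = (j + k) - 1" by simp
  show "0 \<le> 1 - Btail (n - 1) p (j + k - 1)"
    "1 - Btail (n - 1) p (j + k - 1) \<le> exp (- (1/16) * real n * p) / 2"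
    using delta_bound[OF assms(3,4) _ m] assms by auto
qed

theorem lemma5:
  shows
  "(\<exists>C c. C > 0 \<and> c > 0 \<and>
      (\<forall>(n::nat) (k::nat) (p::real) (\<pi>::nat \<Rightarrow> real) (i::nat) (j::nat).
         n \<ge> 2 \<longrightarrow> k \<ge> 1 \<longrightarrow> 0 < p \<longrightarrow> p \<le> 1/2 \<longrightarrow>
         real k \<le> real n * p / 2 - 1 \<longrightarrow>
         (\<forall>i'\<in>{1..k}. \<pi> i' \<ge> 0) \<longrightarrow> (\<Sum>i'=1..k. \<pi> i') = 1 \<longrightarrow>
         i \<in> {1..k} \<longrightarrow> 1 \<le> j \<longrightarrow> real j \<le> real n * p / 2 - real k \<longrightarrow>
         \<bar>beta1 n p k \<pi> j i - \<pi> i / p\<bar> \<le> C * exp (- c * real n * p) / p \<and>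
         \<bar>beta0 n p k \<pi> j i - (1 - \<pi> i)\<bar> \<le> C * p * exp (- c * real n * p)))
   \<and>
   (\<exists>C0 > 0.
      (\<forall>(n::nat) (k::nat) (p::real) (\<pi>::nat \<Rightarrow> real) (i::nat) (j::nat).
         n \<ge> 2 \<longrightarrow> k \<ge> 1 \<longrightarrow> 0 < p \<longrightarrow> p \<le> 1/2 \<longrightarrow>
         real k \<le> real n * p / 2 - 1 \<longrightarrow>
         (\<forall>i'\<in>{1..k}. \<pi> i' > 0) \<longrightarrow> (\<Sum>i'=1..k. \<pi> i') = 1 \<longrightarrow>
         i \<in> {1..k} \<longrightarrow> 1 \<le> j \<longrightarrow> real j \<le> real n * p / 2 - real k \<longrightarrow>
         real n * p \<ge> C0 * ln (Max ((\<lambda>i'. 1 / \<pi> i') ` {1..k})) \<longrightarrow>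
         beta1 n p k \<pi> j i \<ge> \<pi> i / (2 * p) \<and>
         0 \<le> beta0 n p k \<pi> j i \<and> beta0 n p k \<pi> j i \<le> 1))"
proof (intro conjI)
  show "\<exists>C c. C > 0 \<and> c > 0 \<and>
      (\<forall>(n::nat) (k::nat) (p::real) (\<pi>::nat \<Rightarrow> real) (i::nat) (j::nat).
         n \<ge> 2 \<longrightarrow> k \<ge> 1 \<longrightarrow> 0 < p \<longrightarrow> p \<le> 1/2 \<longrightarrow>
         real k \<le> real n * p / 2 - 1 \<longrightarrow>
         (\<forall>i'\<in>{1..k}. \<pi> i' \<ge> 0) \<longrightarrow> (\<Sum>i'=1..k. \<pi> i') = 1 \<longrightarrow>
         i \<in> {1..k} \<longrightarrow> 1 \<le> j \<longrightarrow> real j \<le> real n * p / 2 - real k \<longrightarrow>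
         \<bar>beta1 n p k \<pi> j i - \<pi> i / p\<bar> \<le> C * exp (- c * real n * p) / p \<and>
         \<bar>beta0 n p k \<pi> j i - (1 - \<pi> i)\<bar> \<le> C * p * exp (- c * real n * p))"
  proof (rule exI[of _ "1::real"], rule exI[of _ "1/16::real"], intro conjI allI impI)
    fix n k :: nat and p :: real and \<pi> :: "nat \<Rightarrow> real" and i j :: nat
    assume h: "n \<ge> 2" "k \<ge> 1" "0 < p" "p \<le> 1/2" "real k \<le> real n * p / 2 - 1"
      "\<forall>i'\<in>{1..k}. \<pi> i' \<ge> 0" "(\<Sum>i'=1..k. \<pi> i') = 1"
      "i \<in> {1..k}" "1 \<le> j" "real j \<le> real n * p / 2 - real k"
    note s = setup_facts[OF h(1-4,6-10)]
    note a = alg1B[OF h(3,4) s]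
    show "\<bar>beta1 n p k \<pi> j i - \<pi> i / p\<bar> \<le> 1 * exp (- (1/16) * real n * p) / p"
      using a(1) unfolding beta1_def .
    show "\<bar>beta0 n p k \<pi> j i - (1 - \<pi> i)\<bar> \<le> 1 * p * exp (- (1/16) * real n * p)"
      using a(2) unfolding beta0_def .
  qed auto
  show "\<exists>C0 > 0.
      (\<forall>(n::nat) (k::nat) (p::real) (\<pi>::nat \<Rightarrow> real) (i::nat) (j::nat).
         n \<ge> 2 \<longrightarrow> k \<ge> 1 \<longrightarrow> 0 < p \<longrightarrow> p \<le> 1/2 \<longrightarrow>
         real k \<le> real n * p / 2 - 1 \<longrightarrow>
         (\<forall>i'\<in>{1..k}. \<pi> i' > 0) \<longrightarrow> (\<Sum>i'=1..k. \<pi> i') = 1 \<longrightarrow>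
         i \<in> {1..k} \<longrightarrow> 1 \<le> j \<longrightarrow> real j \<le> real n * p / 2 - real k \<longrightarrow>
         real n * p \<ge> C0 * ln (Max ((\<lambda>i'. 1 / \<pi> i') ` {1..k})) \<longrightarrow>
         beta1 n p k \<pi> j i \<ge> \<pi> i / (2 * p) \<and>
         0 \<le> beta0 n p k \<pi> j i \<and> beta0 n p k \<pi> j i \<le> 1)"
  proof (intro exI[of _ "16::real"] conjI allI impI)
    fix n k :: nat and p :: real and \<pi> :: "nat \<Rightarrow> real" and i j :: nat
    assume h: "n \<ge> 2" "k \<ge> 1" "0 < p" "p \<le> 1/2" "real k \<le> real n * p / 2 - 1"
      "\<forall>i'\<in>{1..k}. \<pi> i' > 0" "(\<Sum>i'=1..k. \<pi> i') = 1"
      "i \<in> {1..k}" "1 \<le> j" "real j \<le> real n * p / 2 - real k"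
      "real n * p \<ge> 16 * ln (Max ((\<lambda>i'. 1 / \<pi> i') ` {1..k}))"
    have h6: "\<forall>i'\<in>{1..k}. \<pi> i' \<ge> 0" using h(6) by auto
    note s = setup_facts[OF h(1-4) h6 h(7-10)]
    have pos: "0 < \<pi> i" using h by auto
    let ?M = "Max ((\<lambda>i'. 1 / \<pi> i') ` {1..k})"
    have M: "1 / \<pi> i \<le> ?M" using h(8) by (intro Max_ge) auto
    have p1: "0 < 1 / \<pi> i" using pos by simp
    have Mp: "0 < ?M" using M p1 by linarith
    have "ln (1 / \<pi> i) \<le> ln ?M" using M by (simp only: ln_le_cancel_iff[OF p1 Mp])
    then have "- ln (\<pi> i) \<le> ln ?M" using pos by (simp add: ln_div)
    then have "- (1/16) * real n * p \<le> ln (\<pi> i)" using h(11) by linarith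
    then have "exp (- (1/16) * real n * p) \<le> exp (ln (\<pi> i))" by simp
    then have E: "exp (- (1/16) * real n * p) \<le> \<pi> i" using pos by simp
    note a = alg2B[OF h(3,4) s E]
    show "\<pi> i / (2 * p) \<le> beta1 n p k \<pi> j i" using a(1) unfolding beta1_def .
    show "0 \<le> beta0 n p k \<pi> j i" using a(2) unfolding beta0_def .
    show "beta0 n p k \<pi> j i \<le> 1" using a(3) unfolding beta0_def .
  qed auto
qed

end
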